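(* Let $(\mathcal{X},d)$ be a Polish space and let $c:\mathcal{X}\times\mathcal{X}\to\mathbb{R}^+$ be of the form $c(x,y)=\phi(d(x,y))$, where $\phi:\mathbb{R}^+\to\mathbb{R}^+$ is convex, $\phi(0)=0$, $\phi(x)>0$ for $x>0$, and $\sup_{x>0}\phi(2x)/\phi(x)<\infty$. Define $p_o=\sup_{x>0}x\phi'(x)/\phi(x)$, where $\phi'$ is the right derivative of $\phi$. Then $1\le p_o<\infty$, and $\tilde d(x,y)=c^{1/p_o}(x,y)$ is a distance on $\mathcal{X}$ inducing the same topology as $d$. *)

theory Defs
  imports "HOL-Analysis.Analysis"
begin

definition right_deriv :: "(real \<Rightarrow> real) \<Rightarrow> real \<Rightarrow> real" where
  "right_deriv f x = Lim (at_right 0) (\<lambda>h. (f (x + h) - f x) / h)"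

definition p_o :: "(real \<Rightarrow> real) \<Rightarrow> real" where
  "p_o \<phi> = Sup {x * right_deriv \<phi> x / \<phi> x | x. x > 0}"

end

theory Submission imports Defs begin
lemma dini_aux:
  fixes F D :: "real \<Rightarrow> real"
  assumes ab: "a < b" and cont: "continuous_on {a..b} F"
    and der: "\<And>u. u \<in> {a..<b} \<Longrightarrow> (F has_real_derivative D u) (at_right u) \<and> D u \<le> 0"
    and e: "e > 0"
  shows "F b \<le> F a + e * (b - a)"
proof (rule ccontr)
  assume nb: "\<not> ?thesis"
  define G where "G v = F v - F a - e * (v - a)" for v
  have Gb: "G b > 0" using nb by (simp add: G_def)
  have contG: "continuous_on {a..b} G" unfolding G_def by (intro continuous_intros cont)
  define T where "T = {a..b} \<inter> G -` {..0}"
  have clT: "closed T" unfolding T_def by (rule continuous_closed_preimage[OF contG]) auto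
  have aT: "a \<in> T" using ab by (simp add: T_def G_def)
  have bdd: "bdd_above T" unfolding T_def by (rule bdd_aboveI[of _ b]) auto
  define m where "m = Sup T"
  have mT: "m \<in> T" unfolding m_def using closed_contains_Sup[OF _ bdd clT] aT by blast
  have mb: "m < b" using mT Gb by (auto simp: T_def) (metis antisym_conv2 not_le)
  have ma: "a \<le> m" using mT by (auto simp: T_def)
  have after: "\<And>v. v \<in> {m<..b} \<Longrightarrow> G v > 0"
  proof -
    fix v assume v: "v \<in> {m<..b}"
    show "G v > 0"
    proof (rule ccontr)
      assume "\<not> G v > 0"
      hence "v \<in> T" using v ma by (auto simp: T_def)
      hence "v \<le> m" unfolding m_def using bdd by (rule cSup_upper)
      thus False using v by auto
    qed
  qed
  from der[of m] mb ma have dm: "(F has_real_derivative D m) (at_right m)" and Dm: "D m \<le> 0" by auto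
  have "(G has_real_derivative D m - e) (at_right m)"
    unfolding G_def by (rule derivative_eq_intros dm | simp)+
  hence lim: "((\<lambda>y. (G y - G m) / (y - m)) \<longlongrightarrow> D m - e) (at_right m)"
    by (simp add: has_field_derivative_iff)
  have "eventually (\<lambda>y. (G y - G m) / (y - m) < 0) (at_right m)"
    using order_tendstoD(2)[OF lim] Dm e by auto
  moreover have "eventually (\<lambda>y. m < y \<and> y < b) (at_right m)"
    using eventually_at_right_real[OF mb] by simp
  ultimately have "eventually (\<lambda>y. (G y - G m) / (y - m) < 0 \<and> m < y \<and> y < b) (at_right m)"
    by (rule eventually_conj)
  then obtain y where y: "(G y - G m) / (y - m) < 0" "m < y" "y < b"
    using eventually_happens[of _ "at_right m"] by (auto simp: trivial_limit_at_right_real)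
  have "G m \<le> 0" using mT by (simp add: T_def)
  moreover have "G y - G m < 0" using y by (simp add: divide_less_0_iff)
  moreover have "G y > 0" using after[of y] y by auto
  ultimately show False by linarith
qed

lemma dini:
  fixes F D :: "real \<Rightarrow> real"
  assumes ab: "a \<le> b" and cont: "continuous_on {a..b} F"
    and der: "\<And>u. u \<in> {a..<b} \<Longrightarrow> (F has_real_derivative D u) (at_right u) \<and> D u \<le> 0"
  shows "F b \<le> F a"
proof (cases "a = b")
  case False
  hence ab': "a < b" using ab by simp
  show ?thesis
  proof (rule field_le_epsilon)
    fix e :: real assume e: "e > 0"
    have "F b \<le> F a + (e / (b - a)) * (b - a)"
      by (rule dini_aux[OF ab' cont der]) (use e ab' in auto)
    thus "F b \<le> F a + e" using ab' by simp
  qed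
qed simp

lemma rderiv:
  fixes \<phi> :: "real \<Rightarrow> real"
  assumes conv: "convex_on {0..} \<phi>" and zero: "\<phi> 0 = 0" and x: "x > 0"
  shows "(\<phi> has_real_derivative right_deriv \<phi> x) (at_right x)"
    "\<phi> x / x \<le> right_deriv \<phi> x" "right_deriv \<phi> x \<le> (\<phi> (2*x) - \<phi> x) / x"
proof -
  define q where "q h = (\<phi> (x + h) - \<phi> x) / h" for h
  have mono: "q h1 \<le> q h2" if h: "0 < h1" "h1 \<le> h2" for h1 h2
  proof -
    have "\<phi> (x + h1) \<le> (\<phi> (x + h2) - \<phi> x) / (x + h2 - x) * (x + h1 - x) + \<phi> x"
      by (rule convex_onD_Icc'[OF convex_on_subset[OF conv]]) (use x h in auto)
    hence "\<phi> (x + h1) - \<phi> x \<le> (\<phi> (x + h2) - \<phi> x) / h2 * h1" by simp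
    thus ?thesis using h unfolding q_def by (simp add: pos_divide_le_eq)
  qed
  have lower: "\<phi> x / x \<le> q h" if h: "h > 0" for h
  proof -
    have "\<phi> x \<le> (\<phi> (x + h) - \<phi> 0) / (x + h - 0) * (x - 0) + \<phi> 0"
      by (rule convex_onD_Icc'[OF convex_on_subset[OF conv]]) (use x h in auto)
    hence "\<phi> x \<le> \<phi> (x + h) / (x + h) * x" using zero by simp
    hence "\<phi> x * (x + h) \<le> \<phi> (x + h) * x" using x h by (simp add: field_simps)
    hence "\<phi> x * h \<le> (\<phi> (x + h) - \<phi> x) * x" by (simp add: algebra_simps)
    thus ?thesis using x h unfolding q_def by (simp add: field_simps)
  qed
  define L where "L = Inf (q ` {0<..})"
  have bdd: "bdd_below (q ` {0<..})" using lower by (intro bdd_belowI2) auto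
  have Lle: "L \<le> q h" if "h > 0" for h
    unfolding L_def using bdd that by (intro cInf_lower) auto
  have Lge: "\<phi> x / x \<le> L"
    unfolding L_def using lower by (intro cInf_greatest) auto
  have tq: "(q \<longlongrightarrow> L) (at_right 0)"
  proof (rule order_tendstoI)
    fix y assume "y < L"
    hence "\<And>h. h > 0 \<Longrightarrow> y < q h" using Lle less_le_trans by blast
    thus "eventually (\<lambda>h. y < q h) (at_right 0)"
      by (rule eventually_mono[OF eventually_at_right_less[of "0::real"]]) simp
  next
    fix y assume "L < y"
    then obtain h0 where h0: "h0 > 0" "q h0 < y"
      unfolding L_def using cInf_less_iff[of "q ` {0<..}" y] bdd by auto
    have "eventually (\<lambda>h. 0 < h \<and> h < h0) (at_right (0::real))"
      using eventually_at_right_real[OF h0(1)] by simp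
    thus "eventually (\<lambda>h. q h < y) (at_right 0)"
      by (rule eventually_mono) (use mono h0 in \<open>meson less_imp_le le_less_trans\<close>)
  qed
  have rd: "right_deriv \<phi> x = L"
    unfolding right_deriv_def using tq unfolding q_def[abs_def]
    by (intro tendsto_Lim) (auto simp: trivial_limit_at_right_real)
  have "((\<lambda>y. (\<phi> y - \<phi> x) / (y - x)) \<longlongrightarrow> L) (at_right x)"
    unfolding filterlim_at_right_to_0[of _ _ x] using tq by (simp add: q_def[abs_def] add.commute)
  thus "(\<phi> has_real_derivative right_deriv \<phi> x) (at_right x)"
    by (simp add: has_field_derivative_iff rd)
  show "\<phi> x / x \<le> right_deriv \<phi> x" using Lge rd by simp
  show "right_deriv \<phi> x \<le> (\<phi> (2*x) - \<phi> x) / x" using Lle[OF x] rd by (simp add: q_def)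
qed

theorem lemma2p1:
  fixes \<phi> :: "real \<Rightarrow> real"
  assumes conv: "convex_on {0..} \<phi>"
    and nonneg: "\<And>x. x \<ge> 0 \<Longrightarrow> \<phi> x \<ge> 0"
    and zero: "\<phi> 0 = 0"
    and pos: "\<And>x. x > 0 \<Longrightarrow> \<phi> x > 0"
    and doubling: "bdd_above {\<phi> (2 * x) / \<phi> x | x. x > 0}"
  shows "bdd_above {x * right_deriv \<phi> x / \<phi> x | x. x > 0}
     \<and> 1 \<le> p_o \<phi>
     \<and> Metric_space (UNIV :: 'a :: polish_space set)
          (\<lambda>x y. \<phi> (dist x y) powr (1 / p_o \<phi>))
     \<and> Metric_space.mtopology (UNIV :: 'a set)
          (\<lambda>x y. \<phi> (dist x y) powr (1 / p_o \<phi>)) = euclidean"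
proof -
  define S where "S = {x * right_deriv \<phi> x / \<phi> x | x. x > 0}"
  define p where "p = p_o \<phi>"
  have pdef: "p = Sup S" unfolding p_def p_o_def S_def ..
  obtain B where B: "\<And>x. x > 0 \<Longrightarrow> \<phi> (2 * x) / \<phi> x \<le> B"
    using doubling unfolding bdd_above_def by blast
  have bddS: "bdd_above S" unfolding S_def
  proof (rule bdd_aboveI[of _ "B - 1"], clarify)
    fix x :: real assume x: "x > 0"
    have "x * right_deriv \<phi> x \<le> x * ((\<phi> (2*x) - \<phi> x) / x)"
      using rderiv(3)[OF conv zero x] x by (intro mult_left_mono) auto
    also have "\<dots> = \<phi> (2*x) - \<phi> x" using x by simp
    finally have "x * right_deriv \<phi> x / \<phi> x \<le> (\<phi> (2*x) - \<phi> x) / \<phi> x"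
      using pos[OF x] by (simp add: divide_right_mono)
    also have "\<dots> = \<phi> (2*x) / \<phi> x - 1" using pos[OF x] by (simp add: diff_divide_distrib)
    finally show "x * right_deriv \<phi> x / \<phi> x \<le> B - 1" using B[OF x] by simp
  qed
  have inS: "x * right_deriv \<phi> x / \<phi> x \<in> S" if "x > 0" for x
    unfolding S_def using that by blast
  have leP: "x * right_deriv \<phi> x \<le> p * \<phi> x" if x: "x > 0" for x
  proof -
    have "x * right_deriv \<phi> x / \<phi> x \<le> p" unfolding pdef using inS[OF x] bddS by (rule cSup_upper)
    thus ?thesis using pos[OF x] by (simp add: pos_divide_le_eq)
  qed
  have p1: "1 \<le> p"
  proof -
    have "\<phi> 1 / 1 \<le> right_deriv \<phi> 1" by (rule rderiv(2)[OF conv zero]) simp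
    hence "1 \<le> 1 * right_deriv \<phi> 1 / \<phi> 1" using pos[of 1] by simp
    also have "\<dots> \<le> p" unfolding pdef using inS[of 1] bddS by (intro cSup_upper) auto
    finally show ?thesis .
  qed
  have pp: "p > 0" using p1 by simp
  have phi_le: "\<phi> s \<le> (s / t) * \<phi> t" if "0 \<le> s" "s \<le> t" "t > 0" for s t
  proof -
    have "\<phi> s \<le> (\<phi> t - \<phi> 0) / (t - 0) * (s - 0) + \<phi> 0"
      by (rule convex_onD_Icc'[OF convex_on_subset[OF conv]]) (use that in auto)
    thus ?thesis using zero by (simp add: mult.commute)
  qed
  have phi_mono: "\<phi> s \<le> \<phi> t" if "0 \<le> s" "s \<le> t" for s t
  proof (cases "t = 0")
    case True thus ?thesis using that by simp
  next
    case False
    hence t: "t > 0" using that by simp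
    have "\<phi> s \<le> (s / t) * \<phi> t" by (rule phi_le) (use that t in auto)
    also have "\<dots> \<le> 1 * \<phi> t" using that t pos[OF t] by (intro mult_right_mono) auto
    finally show ?thesis by simp
  qed
  have phi_strict: "\<phi> s < \<phi> t" if "0 \<le> s" "s < t" for s t
  proof -
    have t: "t > 0" using that by simp
    have "\<phi> s \<le> (s / t) * \<phi> t" by (rule phi_le) (use that t in auto)
    also have "\<dots> < 1 * \<phi> t" using that t pos[OF t] by (intro mult_strict_right_mono) auto
    finally show ?thesis by simp
  qed
  have contphi: "continuous_on {0<..} \<phi>"
    by (rule convex_on_continuous) (auto intro: convex_on_subset[OF conv])
  have Fmono: "\<phi> t * t powr (-p) \<le> \<phi> s * s powr (-p)" if st: "0 < s" "s \<le> t" for s t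
  proof (rule dini[where a = s and b = t and F = "\<lambda>u. \<phi> u * u powr (-p)" and D = "\<lambda>u. right_deriv \<phi> u * u powr (-p) + (-p * u powr (-p - 1)) * \<phi> u"])
    show "s \<le> t" by fact
    show "continuous_on {s..t} (\<lambda>u. \<phi> u * u powr - p)"
      using st by (intro continuous_intros continuous_on_subset[OF contphi]) auto
  next
    fix u assume u: "u \<in> {s..<t}"
    hence u0: "u > 0" using st by auto
    have d1: "(\<phi> has_real_derivative right_deriv \<phi> u) (at_right u)" by (rule rderiv(1)[OF conv zero u0])
    have d2: "((\<lambda>u. u powr (-p)) has_real_derivative (-p * u powr (-p - 1))) (at_right u)"
      by (rule has_field_derivative_at_within[OF has_real_derivative_powr[OF u0]])
    have "((\<lambda>u. \<phi> u * u powr (-p)) has_real_derivative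
       right_deriv \<phi> u * u powr (-p) + (-p * u powr (-p - 1)) * \<phi> u) (at_right u)"
      by (rule DERIV_mult[OF d1 d2])
    moreover have "right_deriv \<phi> u * u powr (-p) + (-p * u powr (-p - 1)) * \<phi> u \<le> 0"
    proof -
      have e: "u powr (-p - 1) = u powr (-p) / u" using u0 by (simp add: powr_diff)
      have "right_deriv \<phi> u * u powr (-p) + (-p * u powr (-p - 1)) * \<phi> u
          = u powr (-p) / u * (u * right_deriv \<phi> u - p * \<phi> u)"
        using u0 by (simp add: e field_simps)
      also have "\<dots> \<le> 0" using leP[OF u0] u0
        by (intro mult_nonneg_nonpos) auto
      finally show ?thesis .
    qed
    ultimately show "((\<lambda>u. \<phi> u * u powr - p) has_real_derivative
       right_deriv \<phi> u * u powr (-p) + (-p * u powr (-p - 1)) * \<phi> u) (at_right u) \<and>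
       right_deriv \<phi> u * u powr (-p) + (-p * u powr (-p - 1)) * \<phi> u \<le> 0" by simp
  qed
  define \<psi> where "\<psi> t = \<phi> t powr (1 / p)" for t
  have psi_ratio: "\<psi> t / t \<le> \<psi> s / s" if st: "0 < s" "s \<le> t" for s t
  proof -
    have t: "t > 0" using st by simp
    have "\<phi> t / t powr p \<le> \<phi> s / s powr p"
      using Fmono[OF st] by (simp add: powr_minus divide_inverse)
    hence "(\<phi> t / t powr p) powr (1/p) \<le> (\<phi> s / s powr p) powr (1/p)"
      using nonneg[of t] t pp by (intro powr_mono2) auto
    moreover have "(\<phi> t / t powr p) powr (1/p) = \<psi> t / t" if "t > 0" for t :: real
      using pp that by (simp add: \<psi>_def powr_divide powr_powr)
    ultimately show ?thesis using st t by simp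
  qed
  have psi_sub: "\<psi> (a + b) \<le> \<psi> a + \<psi> b" if ab: "0 \<le> a" "0 \<le> b" for a b
  proof (cases "a = 0 \<or> b = 0")
    case True thus ?thesis using zero by (auto simp: \<psi>_def)
  next
    case False
    hence a: "a > 0" and b: "b > 0" using ab by auto
    have "a * (\<psi> (a + b) / (a + b)) \<le> a * (\<psi> a / a)"
      using psi_ratio[of a "a+b"] a b by (intro mult_left_mono) auto
    moreover have "b * (\<psi> (a + b) / (a + b)) \<le> b * (\<psi> b / b)"
      using psi_ratio[of b "a+b"] a b by (intro mult_left_mono) auto
    moreover have "\<psi> (a + b) = a * (\<psi> (a + b) / (a + b)) + b * (\<psi> (a + b) / (a + b))"
    proof -
      have "a * (\<psi> (a + b) / (a + b)) + b * (\<psi> (a + b) / (a + b)) = (a + b) * (\<psi> (a + b) / (a + b))"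
        by (rule distrib_right[symmetric])
      thus ?thesis using a b by simp
    qed
    ultimately show ?thesis using a b by simp
  qed
  have psi_mono: "\<psi> s \<le> \<psi> t" if "0 \<le> s" "s \<le> t" for s t
    unfolding \<psi>_def using that pp nonneg[of s] by (intro powr_mono2 phi_mono) auto
  have psi_strict: "\<psi> s < \<psi> t" if "0 \<le> s" "s < t" for s t
    unfolding \<psi>_def using that pp nonneg[of s] by (intro powr_less_mono2 phi_strict) auto
  have psi0: "\<psi> t = 0 \<longleftrightarrow> t = 0" if "t \<ge> 0" for t
    using that pos[of t] zero by (cases "t = 0") (auto simp: \<psi>_def)
  define dd where "dd x y = \<psi> (dist x y)" for x y :: 'a
  have MS: "Metric_space (UNIV :: 'a set) dd"
  proof
    fix x y z :: 'a
    show "0 \<le> dd x y" by (simp add: dd_def \<psi>_def)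
    show "dd x y = dd y x" by (simp add: dd_def dist_commute)
    show "dd x y = 0 \<longleftrightarrow> x = y" using psi0[of "dist x y"] by (simp add: dd_def)
    have "\<psi> (dist x z) \<le> \<psi> (dist x y + dist y z)" by (rule psi_mono) (auto intro: dist_triangle)
    also have "\<dots> \<le> \<psi> (dist x y) + \<psi> (dist y z)" by (rule psi_sub) auto
    finally show "dd x z \<le> dd x y + dd y z" by (simp add: dd_def)
  qed
  have topo: "Metric_space.mtopology (UNIV :: 'a set) dd = euclidean"
  proof (rule topology_eq[THEN iffD2], intro allI iffI)
    fix U :: "'a set"
    assume "openin (Metric_space.mtopology UNIV dd) U"
    hence H: "\<And>x. x \<in> U \<Longrightarrow> \<exists>r>0. Metric_space.mball UNIV dd x r \<subseteq> U"
      by (simp add: Metric_space.openin_mtopology[OF MS])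
    have "open U" unfolding open_dist
    proof (intro ballI)
      fix x assume x: "x \<in> U"
      then obtain r where r: "r > 0" "Metric_space.mball UNIV dd x r \<subseteq> U" using H by blast
      define e where "e = min 1 (r powr p / (\<phi> 1 + 1))"
      have phi1: "\<phi> 1 > 0" using pos by simp
      have e0: "e > 0" unfolding e_def using r phi1 by simp
      have "\<forall>y. dist y x < e \<longrightarrow> y \<in> U"
      proof (intro allI impI)
        fix y assume dy: "dist y x < e"
        define t where "t = dist x y"
        have t: "0 \<le> t" "t < e" using dy by (auto simp: t_def dist_commute)
        have "\<phi> t \<le> (t / 1) * \<phi> 1" by (rule phi_le) (use t e_def in auto)
        also have "\<dots> < r powr p"
        proof -
          have "t * \<phi> 1 \<le> t * (\<phi> 1 + 1)" using t by (intro mult_left_mono) auto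
          also have "\<dots> < e * (\<phi> 1 + 1)" using t phi1 by (intro mult_strict_right_mono) auto
          also have "\<dots> \<le> r powr p"
          proof -
            have "e \<le> r powr p / (\<phi> 1 + 1)" unfolding e_def by simp
            thus ?thesis using phi1 by (simp add: le_divide_eq)
          qed
          finally show ?thesis by simp
        qed
        finally have "\<phi> t powr (1/p) < (r powr p) powr (1/p)"
          using nonneg[of t] t pp by (intro powr_less_mono2) auto
        hence "dd x y < r" using r pp by (simp add: dd_def \<psi>_def t_def powr_powr)
        thus "y \<in> U" using r(2) by (auto simp: Metric_space.in_mball[OF MS])
      qed
      thus "\<exists>e>0. \<forall>y. dist y x < e \<longrightarrow> y \<in> U" using e0 by blast
    qed
    thus "openin euclidean U" by simp
  next
    fix U :: "'a set"
    assume "openin euclidean U"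
    hence oU: "open U" by simp
    show "openin (Metric_space.mtopology UNIV dd) U"
      unfolding Metric_space.openin_mtopology[OF MS]
    proof (intro conjI allI impI)
      fix x assume x: "x \<in> U"
      then obtain e where e: "e > 0" "ball x e \<subseteq> U" using oU open_contains_ball by blast
      have "\<psi> e > 0" using psi_strict[of 0 e] e zero by (simp add: \<psi>_def)
      moreover have "Metric_space.mball UNIV dd x (\<psi> e) \<subseteq> U"
      proof
        fix y assume "y \<in> Metric_space.mball UNIV dd x (\<psi> e)"
        hence "\<psi> (dist x y) < \<psi> e" by (simp add: Metric_space.in_mball[OF MS] dd_def)
        hence "dist x y < e" using psi_mono[of e "dist x y"] e by (meson not_le less_le_trans order_less_imp_le le_less_trans)
        thus "y \<in> U" using e by auto
      qed
      ultimately show "\<exists>r>0. Metric_space.mball UNIV dd x r \<subseteq> U" by blast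
    qed simp
  qed
  have ddeq: "dd = (\<lambda>x y. \<phi> (dist x y) powr (1 / p_o \<phi>))"
    by (simp add: dd_def \<psi>_def p_def fun_eq_iff)
  show ?thesis using bddS p1 MS topo unfolding ddeq S_def p_def by simp
qed

end
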